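(* For every $p\in\mathbb{N}$ and every polynomial $\widehat{v} = \sum_{\ell=0}^p \widehat{v}_\ell T_\ell$ of degree at most $p$ on $[-1,1]$, defining $\widehat{v}_\ell := 0$ for $\ell>p$, it holds that \[ \sum_{\ell\geq 2} |\widehat{v}_\ell| \;\leq\; p^4 \min_{\substack{\widehat{w}\in\mathbb{P}_p([-1,1]):\\ \widehat{w}'' = \widehat{v}''}} \|\widehat{w}\|_{L^\infty((-1,1))}. \]
   Context: For $k\in\mathbb{N}_0$, $T_k$ denotes the Chebyshev polynomial of the first kind of degree $k$, normalized so that $T_k(1)=1$ (i.e. $T_k(\cos\theta)=\cos(k\theta)$). $\mathbb{P}_p([-1,1])$ denotes the space of real polynomials of degree at most $p$ on $[-1,1]$, and $\widehat{w}''$ denotes the second derivative. *)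

theory Defs
  imports "HOL-Analysis.Analysis" "HOL-Computational_Algebra.Polynomial"
begin

fun cheb_T :: "nat \<Rightarrow> real poly" where
  "cheb_T 0 = 1"
| "cheb_T (Suc 0) = [:0, 1:]"
| "cheb_T (Suc (Suc n)) = [:0, 2:] * cheb_T (Suc n) - cheb_T n"

text \<open>L-infinity norm on (-1,1) of a polynomial (continuous, so a supremum).\<close>
definition linf_norm :: "real poly \<Rightarrow> real" where
  "linf_norm w = (SUP x\<in>{-1<..<1}. \<bar>poly w x\<bar>)"

end

theory Submission
  imports Defs
begin

lemma cheb_cos: "poly (cheb_T n) (cos t) = cos (real n * t)"
proof (induction n rule: cheb_T.induct)
  case 1 then show ?case by simp
next
  case 2 then show ?case by simp
next
  case (3 n)
  have e: "cos ((real n + 2) * t) + cos (real n * t) = 2 * cos t * cos ((real n + 1) * t)"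
    using cos_add[of "(real n + 1) * t" t] cos_diff[of "(real n + 1) * t" t]
    by (simp add: algebra_simps)
  have "poly (cheb_T (Suc (Suc n))) (cos t) = 2 * cos t * cos ((real n + 1) * t) - cos (real n * t)"
    using 3 by (simp add: algebra_simps)
  also have "\<dots> = cos ((real n + 2) * t)" using e by simp
  finally show ?case by (simp add: add.commute)
qed

lemma degree_cheb: "degree (cheb_T n) \<le> n"
proof (induction n rule: cheb_T.induct)
  case (3 n)
  have "degree ([:0, 2:] * cheb_T (Suc n)) \<le> Suc (Suc n)"
    using degree_mult_le[of "[:0, 2:]" "cheb_T (Suc n)"] 3 by auto
  moreover have "degree (cheb_T n) \<le> Suc (Suc n)" using 3 by simp
  ultimately show ?case by (simp add: degree_diff_le)
qed auto

lemma cos_sum_zero: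
  fixes N m :: nat
  assumes "0 < m" "m < 2 * N"
  shows "(\<Sum>j<N. cos (real m * ((2 * real j + 1) * pi / (2 * real N)))) = 0"
proof -
  define a where "a = real m * pi / (2 * real N)"
  have a0: "0 < a" using assms by (simp add: a_def)
  have api: "a < pi" using assms by (simp add: a_def field_simps)
  have sa: "sin a \<noteq> 0" using sin_gt_zero[OF a0 api] by simp
  have t: "2 * sin a * cos ((2 * real j + 1) * a) = sin (2 * real (Suc j) * a) - sin (2 * real j * a)" for j
  proof -
    have "2 * sin a * cos ((2 * real j + 1) * a) = sin (a + (2 * real j + 1) * a) + sin (a - (2 * real j + 1) * a)"
      using sin_times_cos[of a "(2 * real j + 1) * a"] by simp
    also have "a + (2 * real j + 1) * a = 2 * real (Suc j) * a" by (simp add: algebra_simps)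
    also have "a - (2 * real j + 1) * a = - (2 * real j * a)" by (simp add: algebra_simps)
    finally show ?thesis by simp
  qed
  have "2 * sin a * (\<Sum>j<N. cos ((2 * real j + 1) * a)) = (\<Sum>j<N. sin (2 * real (Suc j) * a) - sin (2 * real j * a))"
    by (simp add: sum_distrib_left t)
  also have "\<dots> = sin (2 * real N * a) - sin (2 * real 0 * a)"
    by (rule sum_lessThan_telescope)
  also have "2 * real N * a = real m * pi" using assms by (simp add: a_def)
  finally have "2 * sin a * (\<Sum>j<N. cos ((2 * real j + 1) * a)) = 0" by simp
  hence "(\<Sum>j<N. cos ((2 * real j + 1) * a)) = 0" using sa by simp
  moreover have "real m * ((2 * real j + 1) * pi / (2 * real N)) = (2 * real j + 1) * a" for j
    by (simp add: a_def)
  ultimately show ?thesis by simp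
qed


lemma cheb_orth:
  fixes N k l :: nat
  assumes "k < N" "l < N" "1 \<le> l"
  shows "(\<Sum>j<N. cos (real k * ((2 * real j + 1) * pi / (2 * real N))) *
                  cos (real l * ((2 * real j + 1) * pi / (2 * real N))))
         = (if k = l then real N / 2 else 0)"
proof -
  define th where "th j = (2 * real j + 1) * pi / (2 * real N)" for j
  define S where "S m = (\<Sum>j<N. cos (real m * th j))" for m :: nat
  define dd where "dd = (if k \<le> l then l - k else k - l)"
  have S0: "S m = 0" if "0 < m" "m < 2 * N" for m
    using cos_sum_zero[OF that] by (simp add: S_def th_def)
  have prod: "cos (real k * th j) * cos (real l * th j) = (cos (real dd * th j) + cos (real (k + l) * th j)) / 2" for j
  proof -
    have "cos (real k * th j) * cos (real l * th j) = (cos (real k * th j - real l * th j) + cos (real k * th j + real l * th j)) / 2"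
      by (rule cos_times_cos)
    moreover have "cos (real k * th j - real l * th j) = cos (real dd * th j)"
    proof (cases "k \<le> l")
      case True
      then have "real k * th j - real l * th j = - (real dd * th j)"
        by (simp add: dd_def of_nat_diff algebra_simps)
      then show ?thesis by simp
    next
      case False
      then have "real k * th j - real l * th j = real dd * th j"
        by (simp add: dd_def of_nat_diff algebra_simps)
      then show ?thesis by simp
    qed
    moreover have "real k * th j + real l * th j = real (k + l) * th j" by (simp add: algebra_simps)
    ultimately show ?thesis by simp
  qed
  have "(\<Sum>j<N. cos (real k * th j) * cos (real l * th j)) = (S dd + S (k + l)) / 2"
    by (simp add: prod S_def sum.distrib flip: sum_divide_distrib)
  also have "S (k + l) = 0" using assms by (intro S0) auto
  also have "S dd = (if k = l then real N else 0)"
  proof (cases "k = l")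
    case True
    then show ?thesis by (simp add: dd_def S_def)
  next
    case False
    then show ?thesis using assms by (simp add: dd_def S0)
  qed
  finally have X: "(\<Sum>j<N. cos (real k * th j) * cos (real l * th j)) = (if k = l then real N / 2 else 0)"
    by (cases "k = l") auto
  then show ?thesis by (simp only: th_def)
qed


lemma linf_upper:
  assumes "x \<in> {-1<..<1}"
  shows "\<bar>poly w x\<bar> \<le> linf_norm w"
proof -
  have "continuous_on {-1..1} (\<lambda>x. \<bar>poly w x\<bar>)"
    by (intro continuous_intros)
  then have "compact ((\<lambda>x. \<bar>poly w x\<bar>) ` {-1..1::real})"
    by (intro compact_continuous_image) auto
  then have "bdd_above ((\<lambda>x. \<bar>poly w x\<bar>) ` {-1..1::real})"
    by (intro bounded_imp_bdd_above compact_imp_bounded)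
  then have "bdd_above ((\<lambda>x. \<bar>poly w x\<bar>) ` {-1<..<1::real})"
    by (rule bdd_above_mono) auto
  then show ?thesis unfolding linf_norm_def using assms by (rule cSUP_upper2) auto
qed

lemma coeff_bound:
  fixes p l :: nat and d :: "nat \<Rightarrow> real"
  assumes "1 \<le> l" "l \<le> p"
  shows "\<bar>d l\<bar> \<le> 2 * linf_norm (\<Sum>k\<le>p. smult (d k) (cheb_T k))"
proof -
  define N where "N = Suc p"
  define w where "w = (\<Sum>k\<le>p. smult (d k) (cheb_T k))"
  define th where "th j = (2 * real j + 1) * pi / (2 * real N)" for j
  define M where "M = linf_norm w"
  have wth: "poly w (cos (th j)) = (\<Sum>k\<le>p. d k * cos (real k * th j))" for j
    by (simp add: w_def poly_sum cheb_cos)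
  have "(\<Sum>j<N. poly w (cos (th j)) * cos (real l * th j))
      = (\<Sum>j<N. \<Sum>k\<le>p. d k * (cos (real k * th j) * cos (real l * th j)))"
    by (simp add: wth sum_distrib_right mult.assoc)
  also have "\<dots> = (\<Sum>k\<le>p. d k * (\<Sum>j<N. cos (real k * th j) * cos (real l * th j)))"
    by (subst sum.swap) (simp add: sum_distrib_left)
  also have "\<dots> = (\<Sum>k\<le>p. d k * (if k = l then real N / 2 else 0))"
  proof (rule sum.cong)
    fix k assume "k \<in> {..p}"
    then have "k < N" by (simp add: N_def)
    moreover have "l < N" using assms by (simp add: N_def)
    ultimately show "d k * (\<Sum>j<N. cos (real k * th j) * cos (real l * th j)) = d k * (if k = l then real N / 2 else 0)"
      using cheb_orth[of k N l] assms by (simp add: th_def)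
  qed simp
  also have "\<dots> = d l * real N / 2"
    using assms by (simp add: if_distrib sum.delta cong: if_cong)
  finally have eq: "(\<Sum>j<N. poly w (cos (th j)) * cos (real l * th j)) = d l * real N / 2" .
  have bnd: "\<bar>poly w (cos (th j)) * cos (real l * th j)\<bar> \<le> M" if "j < N" for j
  proof -
    have t0: "0 < th j" by (simp add: th_def N_def)
    have "real j \<le> real p" using that by (simp add: N_def)
    then have "pi * (real j * 2) < pi + pi * (real p * 2)" using pi_gt_zero
      by (smt (verit) mult_left_mono)
    then have t1: "th j < pi" using that by (simp add: th_def N_def field_simps)
    have "cos (th j) < cos 0" using cos_monotone_0_pi[of 0 "th j"] t0 t1 by simp
    moreover have "cos pi < cos (th j)" using cos_monotone_0_pi[of "th j" pi] t0 t1 by simp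
    ultimately have "cos (th j) \<in> {-1<..<1}" by simp
    then have a: "\<bar>poly w (cos (th j))\<bar> \<le> M" unfolding M_def by (rule linf_upper)
    have "\<bar>cos (real l * th j)\<bar> \<le> 1" by simp
    then have "\<bar>poly w (cos (th j))\<bar> * \<bar>cos (real l * th j)\<bar> \<le> M * 1"
      using a by (intro mult_mono) auto
    then show ?thesis by (simp add: abs_mult)
  qed
  have "\<bar>d l * real N / 2\<bar> \<le> (\<Sum>j<N. \<bar>poly w (cos (th j)) * cos (real l * th j)\<bar>)"
    unfolding eq[symmetric] by (rule sum_abs)
  also have "\<dots> \<le> (\<Sum>j<N. M)" using bnd by (intro sum_mono) auto
  also have "\<dots> = real N * M" by simp
  finally have "\<bar>d l\<bar> * real N / 2 \<le> real N * M" by (simp add: abs_mult)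
  then have "real N * \<bar>d l\<bar> \<le> real N * (2 * M)" by (simp add: algebra_simps)
  then have "\<bar>d l\<bar> \<le> 2 * M" by (rule mult_left_le_imp_le) (simp add: N_def)
  then show ?thesis by (simp add: M_def w_def)
qed


lemma deg1_repr:
  fixes u :: "real poly"
  assumes "pderiv (pderiv u) = 0"
  shows "u = [:coeff u 0, coeff u 1:]"
proof -
  have "degree (pderiv u) = 0" using assms pderiv_eq_0_iff by blast
  then have "degree u \<le> 1" by (simp add: degree_pderiv)
  then have "coeff u n = 0" if "n > 1" for n using that by (simp add: coeff_eq_0)
  then show ?thesis
    by (auto simp: poly_eq_iff coeff_pCons split: nat.splits)
qed

lemma expand:
  fixes p :: nat and c :: "nat \<Rightarrow> real"
  assumes "1 \<le> p" "pderiv (pderiv w) = pderiv (pderiv (\<Sum>l\<le>p. smult (c l) (cheb_T l)))"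
  shows "\<exists>d. (\<forall>l. 2 \<le> l \<longrightarrow> d l = c l) \<and> w = (\<Sum>k\<le>p. smult (d k) (cheb_T k))"
proof -
  define v where "v = (\<Sum>l\<le>p. smult (c l) (cheb_T l))"
  define u where "u = w - v"
  have "pderiv (pderiv u) = 0" using assms(2) by (simp add: u_def v_def pderiv_diff)
  then have ur: "u = [:coeff u 0, coeff u 1:]" by (rule deg1_repr)
  define a where "a = coeff u 0"
  define b where "b = coeff u 1"
  define d where "d k = c k + (if k = 0 then a else 0) + (if k = 1 then b else 0)" for k
  have "(\<Sum>k\<le>p. smult (d k) (cheb_T k)) = v + (\<Sum>k\<le>p. (if k = 0 then smult a (cheb_T k) else 0))
      + (\<Sum>k\<le>p. (if k = 1 then smult b (cheb_T k) else 0))"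
  proof -
    have "smult (d k) (cheb_T k) = smult (c k) (cheb_T k) + (if k = 0 then smult a (cheb_T k) else 0)
        + (if k = 1 then smult b (cheb_T k) else 0)" for k
      by (simp add: d_def smult_add_left)
    then show ?thesis by (simp only: sum.distrib v_def)
  qed
  also have "\<dots> = v + smult a 1 + smult b [:0, 1:]"
    using assms(1) by (simp add: sum.delta)
  also have "\<dots> = v + u"
  proof -
    have "smult a 1 + smult b [:0, 1:] = [:a, b:]" by (simp add: one_pCons)
    then have "smult a 1 + smult b [:0, 1:] = u" using ur by (simp add: a_def b_def)
    then show ?thesis by (simp add: add.assoc)
  qed
  finally have "w = (\<Sum>k\<le>p. smult (d k) (cheb_T k))" by (simp add: u_def add.assoc)
  moreover have "\<forall>l. 2 \<le> l \<longrightarrow> d l = c l" by (simp add: d_def)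
  ultimately show ?thesis by blast
qed

theorem lemma3p3:
  fixes p :: nat and c :: "nat \<Rightarrow> real"
  assumes "p \<ge> 1"
  shows "(\<Sum>l=2..p. \<bar>c l\<bar>) \<le> real p ^ 4 *
    (INF w\<in>{w :: real poly. degree w \<le> p \<and>
        pderiv (pderiv w) = pderiv (pderiv (\<Sum>l\<le>p. smult (c l) (cheb_T l)))}.
       linf_norm w)"
proof -
  define W where "W = {w :: real poly. degree w \<le> p \<and>
        pderiv (pderiv w) = pderiv (pderiv (\<Sum>l\<le>p. smult (c l) (cheb_T l)))}"
  define L where "L = (\<Sum>l=2..p. \<bar>c l\<bar>)"
  have pp: "real p ^ 4 > 0" using assms by simp
  have "(\<Sum>l\<le>p. smult (c l) (cheb_T l)) \<in> W"
    unfolding W_def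
  proof (simp, intro degree_sum_le)
    fix l assume "l \<in> {..p}"
    then show "degree (smult (c l) (cheb_T l)) \<le> p"
      using degree_smult_le[of "c l" "cheb_T l"] degree_cheb[of l] by simp
  qed simp
  then have ne: "W \<noteq> {}" by blast
  have key: "L / real p ^ 4 \<le> linf_norm w" if wW: "w \<in> W" for w
  proof -
    obtain d where d: "\<forall>l. 2 \<le> l \<longrightarrow> d l = c l" and wd: "w = (\<Sum>k\<le>p. smult (d k) (cheb_T k))"
    proof -
      have "pderiv (pderiv w) = pderiv (pderiv (\<Sum>l\<le>p. smult (c l) (cheb_T l)))"
        using wW unfolding W_def by simp
      from expand[OF assms this] show ?thesis using that by (elim exE conjE)
    qed
    have M0: "0 \<le> linf_norm w" using linf_upper[of 0 w] by simp
    have "L = (\<Sum>l=2..p. \<bar>d l\<bar>)" unfolding L_def using d by (intro sum.cong) auto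
    also have "\<dots> \<le> (\<Sum>l=2..p. 2 * linf_norm w)"
      by (intro sum_mono) (auto simp: wd intro!: coeff_bound)
    also have "\<dots> = real (p - 1) * (2 * linf_norm w)" by simp
    also have "\<dots> \<le> real p ^ 4 * linf_norm w"
    proof -
      have n: "(p - 1) * 2 \<le> p ^ 4"
      proof (cases "p = 1")
        case True then show ?thesis by simp
      next
        case False
        then have p2: "2 \<le> p" using assms by simp
        have "(p - 1) * 2 \<le> p * 2" by simp
        also have "\<dots> \<le> p * p" using p2 by (intro mult_le_mono2)
        also have "\<dots> \<le> (p * p) * (p * p)" using p2 by simp
        also have "\<dots> = p ^ 4" by (simp add: power4_eq_xxxx)
        finally show ?thesis .
      qed
      have "real (p - 1) * 2 \<le> real p ^ 4"
        using of_nat_mono[OF n, where 'a=real] by simp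
      then have "real (p - 1) * 2 * linf_norm w \<le> real p ^ 4 * linf_norm w"
        using M0 by (rule mult_right_mono)
      then show ?thesis by (simp add: mult.assoc)
    qed
    finally have "L \<le> real p ^ 4 * linf_norm w" .
    then show ?thesis using pp by (simp add: pos_divide_le_eq mult.commute)
  qed
  have "L / real p ^ 4 \<le> (INF w\<in>W. linf_norm w)"
    using ne key by (intro cINF_greatest) auto
  then have "L \<le> real p ^ 4 * (INF w\<in>W. linf_norm w)"
    using pp by (simp add: pos_divide_le_eq mult.commute)
  then show ?thesis by (simp add: L_def W_def)
qed

end
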